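(* (a) Consider 3-Majority with $k\le c\sqrt{n/\log n}$, where $c>0$ is a sufficiently small constant. Then there exists an initial configuration from which the consensus time is $\Omega(k)$ with high probability. (b) Consider 2-Choices with $k\le c\,n/\log n$, where $c>0$ is a sufficiently small constant. Then there exists an initial configuration from which the consensus time is $\Omega(k)$ with high probability.
   Context: **Setting.** Let $V$ be a set of $n$ vertices and $k\in\{1,\dots,n\}$. A configuration is a map $\mathsf{opn}\colon V\to[k]$. The process is synchronous: each round $t\ge1$ produces $\mathsf{opn}_t$ from $\mathsf{opn}_{t-1}$, and all vertices make their choices independently. **3-Majority.** Each vertex $v$ samples $w_1,w_2,w_3\in V$ independently and uniformly, with replacement. It sets $\mathsf{opn}_t(v)=\mathsf{opn}_{t-1}(w_1)$ if $\mathsf{opn}_{t-1}(w_1)=\mathsf{opn}_{t-1}(w_2)$, and $\mathsf{opn}_t(v)=\mathsf{opn}_{t-1}(w_3)$ otherwise. **2-Choices.** Each vertex $v$ samples $w_1,w_2\in V$ independently and uniformly, with replacement. It sets $\mathsf{opn}_t(v)=\mathsf{opn}_{t-1}(w_1)$ if $\mathsf{opn}_{t-1}(w_1)=\mathsf{opn}_{t-1}(w_2)$, and $\mathsf{opn}_t(v)=\mathsf{opn}_{t-1}(v)$ otherwise. **Consensus time.** $\tau_{\mathrm{cons}}=\inf\{t\ge0:\exists i\ \forall v,\ \mathsf{opn}_t(v)=i\}$. **Conventions.** "With high probability" means with probability $1-O(n^{-c'})$ for some constant $c'>0$. *)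

theory Defs
  imports "HOL-Probability.Probability"
begin

text \<open>Vertices are 0..<n, opinions are 1..k; a configuration is a map nat => nat
  (only the values on vertices below n matter).\<close>

type_synonym config = "nat \<Rightarrow> nat"

definition three_majority_vertex :: "nat \<Rightarrow> config \<Rightarrow> nat pmf" where
  "three_majority_vertex n x =
     do { w1 \<leftarrow> pmf_of_set {..<n}; w2 \<leftarrow> pmf_of_set {..<n}; w3 \<leftarrow> pmf_of_set {..<n};
          return_pmf (if x w1 = x w2 then x w1 else x w3) }"

definition three_majority_step :: "nat \<Rightarrow> config \<Rightarrow> config pmf" where
  "three_majority_step n x = Pi_pmf {..<n} 0 (\<lambda>v. three_majority_vertex n x)"

definition two_choices_vertex :: "nat \<Rightarrow> config \<Rightarrow> nat \<Rightarrow> nat pmf" where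
  "two_choices_vertex n x v =
     do { w1 \<leftarrow> pmf_of_set {..<n}; w2 \<leftarrow> pmf_of_set {..<n};
          return_pmf (if x w1 = x w2 then x w1 else x v) }"

definition two_choices_step :: "nat \<Rightarrow> config \<Rightarrow> config pmf" where
  "two_choices_step n x = Pi_pmf {..<n} 0 (\<lambda>v. two_choices_vertex n x v)"

fun trajectory :: "(config \<Rightarrow> config pmf) \<Rightarrow> nat \<Rightarrow> config \<Rightarrow> config list pmf" where
  "trajectory step 0 x = return_pmf [x]"
| "trajectory step (Suc t) x =
     bind_pmf (trajectory step t x) (\<lambda>xs. map_pmf (\<lambda>y. xs @ [y]) (step (last xs)))"

definition is_consensus :: "nat \<Rightarrow> config \<Rightarrow> bool" where
  "is_consensus n x \<longleftrightarrow> (\<exists>i. \<forall>v<n. x v = i)"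

text \<open>Probability that consensus is reached at some time t with t < s,
  i.e. the probability of the event tau_cons < s.\<close>
definition prob_cons_before :: "(config \<Rightarrow> config pmf) \<Rightarrow> nat \<Rightarrow> config \<Rightarrow> real \<Rightarrow> real" where
  "prob_cons_before step n x s =
     measure_pmf.prob (trajectory step (nat \<lfloor>s\<rfloor>) x)
       {xs. \<exists>t<length xs. real t < s \<and> is_consensus n (xs ! t)}"

end

theory Submission
  imports Defs
begin


lemma expectation_bind_pmf_bounded:
  fixes f :: "'b \<Rightarrow> real"
  assumes "\<And>y. 0 \<le> f y" "\<And>y. f y \<le> B"
  shows "measure_pmf.expectation (bind_pmf M N) f =
         measure_pmf.expectation M (\<lambda>x. measure_pmf.expectation (N x) f)"
proof -
  have int: "integrable (measure_pmf P) f" for P :: "'b pmf"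
    by (rule measure_pmf.integrable_const_bound[where B=B]) (use assms in auto)
  have nn: "0 \<le> measure_pmf.expectation (N x) f" for x
    by (rule Bochner_Integration.integral_nonneg) (use assms in auto)
  have bnd: "measure_pmf.expectation (N x) f \<le> B" for x
  proof -
    have "measure_pmf.expectation (N x) f \<le> measure_pmf.expectation (N x) (\<lambda>_. B)"
      by (rule integral_mono) (use int assms in auto)
    then show ?thesis by simp
  qed
  have int2: "integrable (measure_pmf M) (\<lambda>x. measure_pmf.expectation (N x) f)"
    by (rule measure_pmf.integrable_const_bound[where B=B]) (use nn bnd in auto)
  have "ennreal (measure_pmf.expectation (bind_pmf M N) f) = (\<integral>\<^sup>+y. ennreal (f y) \<partial>bind_pmf M N)"
    by (rule nn_integral_eq_integral[symmetric]) (use int assms in auto)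
  also have "\<dots> = (\<integral>\<^sup>+x. \<integral>\<^sup>+y. ennreal (f y) \<partial>N x \<partial>M)" by simp
  also have "\<dots> = (\<integral>\<^sup>+x. ennreal (measure_pmf.expectation (N x) f) \<partial>M)"
    by (intro nn_integral_cong nn_integral_eq_integral) (use int assms in auto)
  also have "\<dots> = ennreal (measure_pmf.expectation M (\<lambda>x. measure_pmf.expectation (N x) f))"
    by (rule nn_integral_eq_integral) (use int2 nn in auto)
  finally show ?thesis
    by (subst (asm) ennreal_inj) (auto intro!: Bochner_Integration.integral_nonneg nn assms)
qed



lemma traj_nth_marg:
  "m \<le> t \<Longrightarrow> map_pmf (\<lambda>xs. xs ! m) (trajectory step t x) = map_pmf last (trajectory step m x)"
proof (induction t)
  case 0
  then show ?case by simp
next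
  case (Suc t)
  have len: "length xs = Suc t" if "xs \<in> set_pmf (trajectory step t x)" for xs
    using that
  proof (induction t arbitrary: xs)
    case 0 then show ?case by simp
  next
    case (Suc t) then show ?case by auto
  qed
  show ?case
  proof (cases "m = Suc t")
    case True
    have "map_pmf (\<lambda>xs. xs ! m) (trajectory step (Suc t) x) = map_pmf last (trajectory step (Suc t) x)"
    proof (auto simp: map_bind_pmf map_pmf_comp True intro!: bind_pmf_cong)
      fix xs assume "xs \<in> set_pmf (trajectory step t x)"
      then have "(\<lambda>y. (xs @ [y]) ! Suc t) = (\<lambda>y. y)" using len by (auto simp: nth_append)
      then show "map_pmf (\<lambda>y. (xs @ [y]) ! Suc t) (step (last xs)) = step (last xs)" by simp
    qed
    then show ?thesis using True by simp
  next
    case False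
    then have mt: "m \<le> t" using Suc by simp
    have "map_pmf (\<lambda>xs. xs ! m) (trajectory step (Suc t) x) =
          bind_pmf (trajectory step t x) (\<lambda>xs. return_pmf (xs ! m))"
    proof (auto simp: map_bind_pmf map_pmf_comp intro!: bind_pmf_cong)
      fix xs assume "xs \<in> set_pmf (trajectory step t x)"
      then have "(\<lambda>y. (xs @ [y]) ! m) = (\<lambda>y. xs ! m)" using len mt by (auto simp: nth_append)
      then show "map_pmf (\<lambda>y. (xs @ [y]) ! m) (step (last xs)) = return_pmf (xs ! m)" by simp
    qed
    also have "\<dots> = map_pmf (\<lambda>xs. xs ! m) (trajectory step t x)"
      by (simp add: map_pmf_def)
    finally show ?thesis using Suc mt by simp
  qed
qed

lemma traj_supermart:
  fixes \<Phi> :: "nat \<Rightarrow> config \<Rightarrow> real"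
  assumes nn: "\<And>m y. 0 \<le> \<Phi> m y" and bd: "\<And>m y. \<Phi> m y \<le> B"
    and st: "\<And>m y. m < T \<Longrightarrow> measure_pmf.expectation (step y) (\<Phi> (Suc m)) \<le> \<Phi> m y"
  shows "m \<le> T \<Longrightarrow> measure_pmf.expectation (trajectory step m x) (\<lambda>xs. \<Phi> m (last xs)) \<le> \<Phi> 0 x"
proof (induction m)
  case 0 then show ?case by simp
next
  case (Suc m)
  have int: "integrable (measure_pmf P) f" if "\<And>y. 0 \<le> f y" "\<And>y. f y \<le> B" for P :: "'b pmf" and f
    by (rule measure_pmf.integrable_const_bound[where B=B]) (use that in auto)
  have "measure_pmf.expectation (trajectory step (Suc m) x) (\<lambda>xs. \<Phi> (Suc m) (last xs))
     = measure_pmf.expectation (trajectory step m x)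
         (\<lambda>xs. measure_pmf.expectation (map_pmf (\<lambda>y. xs @ [y]) (step (last xs))) (\<lambda>xs. \<Phi> (Suc m) (last xs)))"
    by (simp only: trajectory.simps, rule expectation_bind_pmf_bounded[where B=B]) (use nn bd in auto)
  also have "\<dots> = measure_pmf.expectation (trajectory step m x)
         (\<lambda>xs. measure_pmf.expectation (step (last xs)) (\<Phi> (Suc m)))"
    by simp
  also have "\<dots> \<le> measure_pmf.expectation (trajectory step m x) (\<lambda>xs. \<Phi> m (last xs))"
  proof (rule integral_mono)
    show "integrable (measure_pmf (trajectory step m x)) (\<lambda>xs. measure_pmf.expectation (step (last xs)) (\<Phi> (Suc m)))"
    proof (rule int)
      fix xs
      show "0 \<le> measure_pmf.expectation (step (last xs)) (\<Phi> (Suc m))"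
        by (rule Bochner_Integration.integral_nonneg) (use nn in auto)
      have "measure_pmf.expectation (step (last xs)) (\<Phi> (Suc m)) \<le> measure_pmf.expectation (step (last xs)) (\<lambda>_. B)"
        by (rule integral_mono) (auto intro!: int nn bd)
      then show "measure_pmf.expectation (step (last xs)) (\<Phi> (Suc m)) \<le> B" by simp
    qed
    show "integrable (measure_pmf (trajectory step m x)) (\<lambda>xs. \<Phi> m (last xs))"
      by (rule int) (use nn bd in auto)
    show "measure_pmf.expectation (step (last xs)) (\<Phi> (Suc m)) \<le> \<Phi> m (last xs)" for xs
      using st Suc.prems by simp
  qed
  also have "\<dots> \<le> \<Phi> 0 x" using Suc by simp
  finally show ?case .
qed



definition cnt :: "nat \<Rightarrow> nat set \<Rightarrow> config \<Rightarrow> nat" where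
  "cnt n S y = card {v. v < n \<and> y v \<in> S}"

lemma cnt_sum: "real (cnt n S y) = (\<Sum>v<n. if y v \<in> S then 1 else 0)"
proof -
  have "(\<Sum>v<n. (if y v \<in> S then 1 else 0::real)) = real (card {v\<in>{..<n}. y v \<in> S})"
    by (subst sum.If_cases) (auto intro!: arg_cong[where f=card])
  also have "{v\<in>{..<n}. y v \<in> S} = {v. v < n \<and> y v \<in> S}" by auto
  finally show ?thesis by (simp add: cnt_def)
qed

lemma cnt_le: "cnt n S y \<le> n"
proof -
  have "cnt n S y \<le> card {..<n}" unfolding cnt_def by (rule card_mono) auto
  then show ?thesis by simp
qed

lemma exp_ind_expect:
  fixes p :: "nat pmf"
  shows "measure_pmf.expectation p (\<lambda>z. exp (l * (if z \<in> S then 1 else 0)))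
         = 1 + (exp l - 1) * measure_pmf.prob p S"
proof -
  have "(\<lambda>z. exp (l * (if z \<in> S then 1 else 0))) = (\<lambda>z. 1 + (exp l - 1) * indicator S z)"
    by (auto simp: indicator_def)
  then show ?thesis
    by (simp add: measure_pmf.emeasure_eq_measure)
qed

lemma mgf_Pi:
  fixes q :: "nat \<Rightarrow> nat pmf"
  shows "measure_pmf.expectation (Pi_pmf {..<n} 0 q) (\<lambda>z. exp (l * real (cnt n S z)))
       = (\<Prod>v<n. 1 + (exp l - 1) * measure_pmf.prob (q v) S)"
proof -
  have e: "exp (l * real (cnt n S z)) = (\<Prod>v<n. exp (l * (if z v \<in> S then 1 else 0)))" for z
    by (simp add: cnt_sum sum_distrib_left exp_sum)
  have "measure_pmf.expectation (Pi_pmf {..<n} 0 q) (\<lambda>z. exp (l * real (cnt n S z)))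
     = measure_pmf.expectation (Pi_pmf {..<n} 0 q) (\<lambda>z. \<Prod>v<n. (\<lambda>v w. exp (l * (if w \<in> S then 1 else 0))) v (z v))"
    by (simp add: e)
  also have "\<dots> = (\<Prod>v<n. measure_pmf.expectation (q v) (\<lambda>w. exp (l * (if w \<in> S then 1 else 0))))"
  proof (rule expectation_prod_Pi_pmf)
    fix v
    show "integrable (measure_pmf (q v)) (\<lambda>w. exp (l * (if w \<in> S then 1 else 0)))"
      by (rule measure_pmf.integrable_const_bound[where B="exp l + 1"]) auto
  qed auto
  also have "\<dots> = (\<Prod>v<n. 1 + (exp l - 1) * measure_pmf.prob (q v) S)"
    by (simp add: exp_ind_expect)
  finally show ?thesis .
qed



lemma expect_unif:
  assumes "n > 0"
  shows "measure_pmf.expectation (pmf_of_set {..<n}) f = (\<Sum>w<n. f w) / real n"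
  using assms by (subst integral_pmf_of_set) auto

lemma prob_as_expect: "measure_pmf.prob p S = measure_pmf.expectation p (\<lambda>z. if z \<in> S then 1 else 0::real)"
proof -
  have "(\<lambda>z. if z \<in> S then 1 else 0::real) = indicator S" by (auto simp: indicator_def)
  then show ?thesis by (simp add: measure_pmf.emeasure_eq_measure)
qed

lemma tm_prob:
  fixes y :: config and S :: "nat set"
  assumes n: "n > 0"
  defines "a \<equiv> real (cnt n S y) / real n"
  shows "measure_pmf.prob (three_majority_vertex n y) S \<le> a^2 + a"
proof -
  define I where "I w = (if y w \<in> S then 1 else 0::real)" for w
  define g where "g w1 w2 w3 = (if (if y w1 = y w2 then y w1 else y w3) \<in> S then 1 else 0::real)" for w1 w2 w3
  have sI: "(\<Sum>w<n. I w) = real (cnt n S y)" by (simp add: cnt_sum I_def)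
  have gle: "g w1 w2 w3 \<le> I w1 * I w2 + I w3" for w1 w2 w3
    by (auto simp: g_def I_def)
  have "measure_pmf.prob (three_majority_vertex n y) S =
        (\<Sum>w1<n. (\<Sum>w2<n. (\<Sum>w3<n. g w1 w2 w3) / real n) / real n) / real n"
    unfolding prob_as_expect three_majority_vertex_def
    apply (subst expectation_bind_pmf_bounded[where B=1], simp, simp)
    apply (subst expect_unif[OF n])
    apply (subst expectation_bind_pmf_bounded[where B=1], simp, simp)
    apply (subst expect_unif[OF n])
    apply (subst expectation_bind_pmf_bounded[where B=1], simp, simp)
    apply (subst expect_unif[OF n])
    apply (simp add: g_def)
    done
  also have "\<dots> \<le> (\<Sum>w1<n. (\<Sum>w2<n. (\<Sum>w3<n. I w1 * I w2 + I w3) / real n) / real n) / real n"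
    by (intro divide_right_mono sum_mono gle) auto
  also have "\<dots> = a^2 + a"
  proof -
    define N where "N = real (cnt n S y)"
    have nn: "real n > 0" using n by simp
    have 1: "(\<Sum>w3<n. I w1 * I w2 + I w3) / real n = I w1 * I w2 + N / n" for w1 w2
      using nn by (simp add: sum.distrib sI N_def field_simps)
    have c: "(\<Sum>w<n. N / n) = N" using nn by simp
    have p1: "(\<Sum>w2<n. I w1 * I w2) = I w1 * N" for w1 by (simp add: sum_distrib_left[symmetric] sI N_def)
    have 2: "(\<Sum>w2<n. I w1 * I w2 + N / n) / real n = I w1 * N / n + N / n" for w1
      by (simp add: sum.distrib p1 c add_divide_distrib)
    have p2: "(\<Sum>w1<n. I w1 * N / n) = N * N / n"
      by (simp add: sum_divide_distrib[symmetric] sum_distrib_right[symmetric] sI N_def)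
    have 3: "(\<Sum>w1<n. I w1 * N / n + N / n) / real n = (N/n)^2 + N / n"
      by (simp add: sum.distrib p2 c add_divide_distrib power2_eq_square)
    show ?thesis unfolding a_def N_def[symmetric] by (simp only: 1 2 3)
  qed
  finally show ?thesis .
qed

lemma tc_prob:
  fixes y :: config and S :: "nat set"
  assumes n: "n > 0" and nv: "y v \<notin> S"
  defines "a \<equiv> real (cnt n S y) / real n"
  shows "measure_pmf.prob (two_choices_vertex n y v) S \<le> a^2"
proof -
  define I where "I w = (if y w \<in> S then 1 else 0::real)" for w
  define g where "g w1 w2 = (if (if y w1 = y w2 then y w1 else y v) \<in> S then 1 else 0::real)" for w1 w2
  have sI: "(\<Sum>w<n. I w) = real (cnt n S y)" by (simp add: cnt_sum I_def)
  have gle: "g w1 w2 \<le> I w1 * I w2" for w1 w2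
    using nv by (auto simp: g_def I_def)
  have "measure_pmf.prob (two_choices_vertex n y v) S =
        (\<Sum>w1<n. (\<Sum>w2<n. g w1 w2) / real n) / real n"
    unfolding prob_as_expect two_choices_vertex_def
    apply (subst expectation_bind_pmf_bounded[where B=1], simp, simp)
    apply (subst expect_unif[OF n])
    apply (subst expectation_bind_pmf_bounded[where B=1], simp, simp)
    apply (subst expect_unif[OF n])
    apply (simp add: g_def)
    done
  also have "\<dots> \<le> (\<Sum>w1<n. (\<Sum>w2<n. I w1 * I w2) / real n) / real n"
    by (intro divide_right_mono sum_mono gle) auto
  also have "\<dots> = a^2"
  proof -
    define N where "N = real (cnt n S y)"
    have nn: "real n > 0" using n by simp
    have 1: "(\<Sum>w2<n. I w1 * I w2) / real n = I w1 * N / n" for w1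
      using nn by (simp add: sI N_def sum_distrib_left[symmetric])
    have p2: "(\<Sum>w1<n. I w1 * N / n) = N * N / n"
      by (simp add: sum_divide_distrib[symmetric] sum_distrib_right[symmetric] sI N_def)
    have 3: "(\<Sum>w1<n. I w1 * N / n) / real n = (N/n)^2"
      by (simp add: p2 power2_eq_square)
    show ?thesis unfolding a_def N_def[symmetric] by (simp only: 1 3)
  qed
  finally show ?thesis .
qed



lemma tm_mgf:
  fixes y :: config and S :: "nat set"
  assumes n: "n > 0" and l: "l \<ge> 0"
  defines "a \<equiv> real (cnt n S y) / real n"
  shows "measure_pmf.expectation (three_majority_step n y) (\<lambda>z. exp (l * real (cnt n S z)))
         \<le> exp ((exp l - 1) * real n * (a^2 + a))"
proof -
  have el: "exp l - 1 \<ge> 0" using l by simp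
  have "measure_pmf.expectation (three_majority_step n y) (\<lambda>z. exp (l * real (cnt n S z)))
      = (\<Prod>v<n. 1 + (exp l - 1) * measure_pmf.prob (three_majority_vertex n y) S)"
    unfolding three_majority_step_def by (rule mgf_Pi)
  also have "\<dots> \<le> (\<Prod>v<n. exp ((exp l - 1) * (a^2 + a)))"
  proof (rule prod_mono, rule conjI)
    fix v
    show "0 \<le> 1 + (exp l - 1) * measure_pmf.prob (three_majority_vertex n y) S"
      using el by simp
    have "1 + (exp l - 1) * measure_pmf.prob (three_majority_vertex n y) S \<le> 1 + (exp l - 1) * (a^2 + a)"
      using tm_prob[OF n, of y S] el unfolding a_def by (intro add_left_mono mult_left_mono) auto
    also have "\<dots> \<le> exp ((exp l - 1) * (a^2 + a))" using exp_ge_add_one_self[of "(exp l - 1) * (a^2 + a)"] by (simp add: add.commute)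
    finally show "1 + (exp l - 1) * measure_pmf.prob (three_majority_vertex n y) S \<le> exp ((exp l - 1) * (a^2 + a))" .
  qed
  also have "\<dots> = exp ((exp l - 1) * real n * (a^2 + a))"
    by (simp add: exp_of_nat_mult[symmetric] mult_ac)
  finally show ?thesis .
qed

lemma tc_mgf:
  fixes y :: config and S :: "nat set"
  assumes n: "n > 0" and l: "l \<ge> 0"
  defines "a \<equiv> real (cnt n S y) / real n"
  shows "measure_pmf.expectation (two_choices_step n y) (\<lambda>z. exp (l * real (cnt n S z)))
         \<le> exp (l * real (cnt n S y) + (exp l - 1) * real n * a^2)"
proof -
  have el: "exp l - 1 \<ge> 0" using l by simp
  have "measure_pmf.expectation (two_choices_step n y) (\<lambda>z. exp (l * real (cnt n S z)))
      = (\<Prod>v<n. 1 + (exp l - 1) * measure_pmf.prob (two_choices_vertex n y v) S)"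
    unfolding two_choices_step_def by (rule mgf_Pi)
  also have "\<dots> \<le> (\<Prod>v<n. exp (l * (if y v \<in> S then 1 else 0) + (exp l - 1) * a^2))"
  proof (rule prod_mono, rule conjI)
    fix v
    show "0 \<le> 1 + (exp l - 1) * measure_pmf.prob (two_choices_vertex n y v) S"
      using el by simp
    show "1 + (exp l - 1) * measure_pmf.prob (two_choices_vertex n y v) S \<le> exp (l * (if y v \<in> S then 1 else 0) + (exp l - 1) * a^2)"
    proof (cases "y v \<in> S")
      case True
      have "1 + (exp l - 1) * measure_pmf.prob (two_choices_vertex n y v) S \<le> 1 + (exp l - 1) * 1"
        using el by (intro add_left_mono mult_left_mono) auto
      also have "\<dots> = exp l" by simp
      also have "\<dots> \<le> exp (l * (if y v \<in> S then 1 else 0) + (exp l - 1) * a^2)"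
        using True el by simp
      finally show ?thesis .
    next
      case False
      have "1 + (exp l - 1) * measure_pmf.prob (two_choices_vertex n y v) S \<le> 1 + (exp l - 1) * a^2"
        using tc_prob[of n y v S, OF n False] el unfolding a_def by (intro add_left_mono mult_left_mono) auto
      also have "\<dots> \<le> exp ((exp l - 1) * a^2)" by (simp add: add.commute)
      finally show ?thesis using False by simp
    qed
  qed
  also have "\<dots> = exp (l * real (cnt n S y) + (exp l - 1) * real n * a^2)"
    by (simp add: exp_sum[symmetric] sum.distrib sum_distrib_left[symmetric] cnt_sum mult_ac)
  finally show ?thesis .
qed

lemma cap_bound:
  fixes step :: "config \<Rightarrow> config pmf" and lam :: "nat \<Rightarrow> real"
  assumes B: "B > 0" and th1: "\<theta> \<le> 1"
    and lam_nn: "\<And>j. j \<le> T \<Longrightarrow> lam j \<ge> 0"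
    and Bthr: "\<And>j. j \<le> T \<Longrightarrow> B \<le> exp (lam j * \<theta> * real n)"
    and drift: "\<And>j y. j < T \<Longrightarrow> real (cnt n S y) < \<theta> * real n \<Longrightarrow>
        measure_pmf.expectation (step y) (\<lambda>z. exp (lam (Suc j) * real (cnt n S z))) \<le> exp (lam j * real (cnt n S y))"
  shows "measure_pmf.prob (trajectory step T x) {xs. cnt n S (last xs) = n} \<le> exp (lam 0 * real (cnt n S x)) / B"
proof -
  define \<Phi> where "\<Phi> j y = min (exp (lam j * real (cnt n S y))) B" for j y
  have nn: "0 \<le> \<Phi> j y" for j y using B by (simp add: \<Phi>_def)
  have bd: "\<Phi> j y \<le> B" for j y by (simp add: \<Phi>_def)
  have int: "integrable (measure_pmf P) f" if "\<And>y. 0 \<le> f y" "\<And>y. f y \<le> C" for P :: "'b pmf" and f :: "'b \<Rightarrow> real" and C :: real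
    by (rule measure_pmf.integrable_const_bound[where B=C]) (use that in auto)
  have st: "measure_pmf.expectation (step y) (\<Phi> (Suc m)) \<le> \<Phi> m y" if m: "m < T" for m y
  proof -
    have intE: "integrable (measure_pmf (step y)) (\<lambda>z. exp (lam (Suc m) * real (cnt n S z)))"
    proof (rule int)
      fix z
      show "0 \<le> exp (lam (Suc m) * real (cnt n S z))" by simp
      have "lam (Suc m) * real (cnt n S z) \<le> lam (Suc m) * real n"
        using lam_nn[of "Suc m"] m cnt_le[of n S z] by (intro mult_left_mono) auto
      then show "exp (lam (Suc m) * real (cnt n S z)) \<le> exp (lam (Suc m) * real n)" by simp
    qed
    have e1: "measure_pmf.expectation (step y) (\<Phi> (Suc m)) \<le> measure_pmf.expectation (step y) (\<lambda>z. exp (lam (Suc m) * real (cnt n S z)))"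
      by (rule integral_mono[OF int[OF nn bd] intE]) (simp add: \<Phi>_def)
    have e2: "measure_pmf.expectation (step y) (\<Phi> (Suc m)) \<le> B"
    proof -
      have "measure_pmf.expectation (step y) (\<Phi> (Suc m)) \<le> measure_pmf.expectation (step y) (\<lambda>_. B)"
        by (rule integral_mono[OF int[OF nn bd]]) (auto simp: bd)
      then show ?thesis by simp
    qed
    show ?thesis
    proof (cases "real (cnt n S y) < \<theta> * real n")
      case True
      then show ?thesis using e1 e2 drift[OF m True] by (simp add: \<Phi>_def)
    next
      case False
      have "B \<le> exp (lam m * \<theta> * real n)" using Bthr m by simp
      also have "\<dots> \<le> exp (lam m * real (cnt n S y))"
        using False lam_nn[of m] m by (simp add: mult.assoc mult_left_mono)
      finally show ?thesis using e2 by (simp add: \<Phi>_def)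
    qed
  qed
  have E: "measure_pmf.expectation (trajectory step T x) (\<lambda>xs. \<Phi> T (last xs)) \<le> \<Phi> 0 x"
    by (rule traj_supermart[where B=B and \<Phi>=\<Phi> and step=step and T=T, OF nn bd st]) auto
  have BT: "B \<le> exp (lam T * real n)"
  proof -
    have "B \<le> exp (lam T * \<theta> * real n)" using Bthr by simp
    also have "\<dots> \<le> exp (lam T * real n)"
    proof -
      have "lam T * \<theta> \<le> lam T" using mult_left_mono[OF th1 lam_nn[of T]] by simp
      then have "lam T * \<theta> * real n \<le> lam T * real n" by (rule mult_right_mono) simp
      then show ?thesis by simp
    qed
    finally show ?thesis .
  qed
  have ind: "B * indicator {xs. cnt n S (last xs) = n} xs \<le> \<Phi> T (last xs)" for xs
    using BT B by (auto simp: \<Phi>_def indicator_def)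
  have "B * measure_pmf.prob (trajectory step T x) {xs. cnt n S (last xs) = n}
      = measure_pmf.expectation (trajectory step T x) (\<lambda>xs. B * indicator {xs. cnt n S (last xs) = n} xs)"
    by (simp add: measure_pmf.emeasure_eq_measure)
  also have "\<dots> \<le> measure_pmf.expectation (trajectory step T x) (\<lambda>xs. \<Phi> T (last xs))"
  proof (rule integral_mono)
    show "integrable (measure_pmf (trajectory step T x)) (\<lambda>xs. B * indicator {xs. cnt n S (last xs) = n} xs)"
      by (rule measure_pmf.integrable_const_bound[where B=B]) (use B in \<open>auto simp: indicator_def\<close>)
    show "integrable (measure_pmf (trajectory step T x)) (\<lambda>xs. \<Phi> T (last xs))"
      by (rule measure_pmf.integrable_const_bound[where B=B]) (use nn bd in auto)
  qed (rule ind)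
  also have "\<dots> \<le> exp (lam 0 * real (cnt n S x))" using E by (simp add: \<Phi>_def)
  finally show ?thesis using B by (simp add: field_simps)
qed



definition Sset :: "nat \<Rightarrow> nat \<Rightarrow> nat set" where
  "Sset k i = (if i = 0 then - {1..k} else {i})"

lemma cons_cnt:
  assumes "is_consensus n y"
  shows "\<exists>i\<le>k. cnt n (Sset k i) y = n"
proof -
  from assms obtain c where c: "\<forall>v<n. y v = c" unfolding is_consensus_def by blast
  have full: "cnt n S y = n" if "c \<in> S" for S
  proof -
    have "{v. v < n \<and> y v \<in> S} = {..<n}" using c that by auto
    then show ?thesis by (simp add: cnt_def)
  qed
  show ?thesis
  proof (cases "c \<in> {1..k}")
    case True
    then show ?thesis by (intro exI[of _ c]) (auto simp: Sset_def intro!: full)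
  next
    case False
    then show ?thesis by (intro exI[of _ 0]) (auto simp: Sset_def intro!: full)
  qed
qed

lemma prob_cons_last:
  assumes hyp: "\<And>i. i \<le> k \<Longrightarrow> measure_pmf.prob P {xs. cnt n (Sset k i) (last xs) = n} \<le> \<beta>"
  shows "measure_pmf.prob P {xs. is_consensus n (last xs)} \<le> real (Suc k) * \<beta>"
proof -
  have "measure_pmf.prob P {xs. is_consensus n (last xs)} \<le>
        measure_pmf.prob P (\<Union>i\<in>{..k}. {xs. cnt n (Sset k i) (last xs) = n})"
    by (rule measure_pmf.finite_measure_mono) (auto dest: cons_cnt)
  also have "\<dots> \<le> (\<Sum>i\<in>{..k}. measure_pmf.prob P {xs. cnt n (Sset k i) (last xs) = n})"
    by (rule measure_pmf.finite_measure_subadditive_finite) auto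
  also have "\<dots> \<le> (\<Sum>i\<in>{..k}. \<beta>)" by (rule sum_mono) (simp add: hyp)
  finally show ?thesis by simp
qed

lemma cons_union:
  assumes hyp: "\<And>t i. t \<le> nat \<lfloor>s\<rfloor> \<Longrightarrow> i \<le> k \<Longrightarrow>
      measure_pmf.prob (trajectory step t x) {xs. cnt n (Sset k i) (last xs) = n} \<le> \<beta>"
  shows "prob_cons_before step n x s \<le> real (Suc (nat \<lfloor>s\<rfloor>)) * (real (Suc k) * \<beta>)"
proof -
  define T where "T = nat \<lfloor>s\<rfloor>"
  have tle: "t \<le> T" if "real t < s" for t
    using that unfolding T_def by linarith
  have "prob_cons_before step n x s \<le>
        measure_pmf.prob (trajectory step T x) (\<Union>t\<in>{..T}. {xs. is_consensus n (xs ! t)})"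
    unfolding prob_cons_before_def T_def[symmetric]
    by (rule measure_pmf.finite_measure_mono) (auto dest: tle)
  also have "\<dots> \<le> (\<Sum>t\<in>{..T}. measure_pmf.prob (trajectory step T x) {xs. is_consensus n (xs ! t)})"
    by (rule measure_pmf.finite_measure_subadditive_finite) auto
  also have "\<dots> \<le> (\<Sum>t\<in>{..T}. real (Suc k) * \<beta>)"
  proof (rule sum_mono)
    fix t assume t: "t \<in> {..T}"
    have "measure_pmf.prob (trajectory step T x) {xs. is_consensus n (xs ! t)}
        = measure_pmf.prob (map_pmf (\<lambda>xs. xs ! t) (trajectory step T x)) {y. is_consensus n y}"
      by simp
    also have "\<dots> = measure_pmf.prob (map_pmf last (trajectory step t x)) {y. is_consensus n y}"
      using t by (simp add: traj_nth_marg)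
    also have "\<dots> = measure_pmf.prob (trajectory step t x) {xs. is_consensus n (last xs)}"
      by simp
    also have "\<dots> \<le> real (Suc k) * \<beta>"
      by (rule prob_cons_last) (use t hyp T_def in auto)
    finally show "measure_pmf.prob (trajectory step T x) {xs. is_consensus n (xs ! t)} \<le> real (Suc k) * \<beta>" .
  qed
  finally show ?thesis by (simp add: T_def)
qed

definition x0 :: "nat \<Rightarrow> config" where "x0 k v = v mod k + 1"

lemma x0_range: "k > 0 \<Longrightarrow> x0 k v \<in> {1..k}"
  by (simp add: x0_def Suc_leI)

lemma x0_cnt:
  assumes k: "k > 0" and i: "i \<le> k"
  shows "real (cnt n (Sset k i) (x0 k)) \<le> real n / real k + 1"
proof (cases "i = 0")
  case True
  then have "cnt n (Sset k i) (x0 k) = 0" using k by (simp add: cnt_def Sset_def x0_def Suc_leI)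
  then show ?thesis by simp
next
  case False
  have inj: "inj_on (\<lambda>v. v div k) {v. v < n \<and> x0 k v \<in> {i}}"
  proof (rule inj_onI)
    fix u w assume "u \<in> {v. v < n \<and> x0 k v \<in> {i}}" "w \<in> {v. v < n \<and> x0 k v \<in> {i}}" "u div k = w div k"
    then have "u mod k = w mod k" "u div k = w div k" by (auto simp: x0_def)
    then show "u = w" by (metis div_mult_mod_eq)
  qed
  have sub: "(\<lambda>v. v div k) ` {v. v < n \<and> x0 k v \<in> {i}} \<subseteq> {..n div k}"
    by (auto intro: div_le_mono)
  have "cnt n (Sset k i) (x0 k) = card {v. v < n \<and> x0 k v \<in> {i}}"
    using False by (simp add: cnt_def Sset_def)
  also have "\<dots> = card ((\<lambda>v. v div k) ` {v. v < n \<and> x0 k v \<in> {i}})" using card_image[OF inj] by simp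
  also have "\<dots> \<le> card {..n div k}" by (rule card_mono) (use sub in auto)
  also have "\<dots> = n div k + 1" by simp
  finally have "real (cnt n (Sset k i) (x0 k)) \<le> real (n div k) + 1" by linarith
  also have "real (n div k) \<le> real n / real k"
  proof -
    have "(n div k) * k \<le> n" by (metis div_mult_mod_eq le_add1)
    then have "real (n div k) * real k \<le> real n" by (metis of_nat_le_iff of_nat_mult)
    then show ?thesis using k by (simp add: pos_le_divide_eq)
  qed
  finally show ?thesis by simp
qed



lemma pow_exp_bound:
  fixes \<theta> :: real
  assumes "\<theta> \<ge> 0" "2 * real m * \<theta> \<le> 1/4"
  shows "(1 + \<theta>) ^ (2 * m) \<le> 3/2"
proof -
  have "(1 + \<theta>) ^ (2 * m) \<le> exp \<theta> ^ (2 * m)"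
    by (rule power_mono) (use assms in \<open>auto simp: add.commute\<close>)
  also have "\<dots> = exp (2 * real m * \<theta>)" by (simp add: exp_of_nat_mult[symmetric] mult_ac)
  also have "\<dots> \<le> exp (1/4)" using assms by simp
  also have "\<dots> \<le> 1 + 1/4 + (1/4)^2" by (rule exp_bound) auto
  finally have "(1 + \<theta>) ^ (2 * m) \<le> 1 + 1/4 + (1/4)^2" .
  then show ?thesis by (simp add: power2_eq_square)
qed

lemma tm_single:
  assumes n: "n > 0" and k: "k \<ge> 2" and t: "real t \<le> real k / 16" and i: "i \<le> k"
  shows "measure_pmf.prob (trajectory (three_majority_step n) t (x0 k))
           {xs. cnt n (Sset k i) (last xs) = n} \<le> exp (1 - real n / (2 * real k ^ 2))"
proof -
  define \<theta> :: real where "\<theta> = 2 / real k"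
  define \<mu> :: real where "\<mu> = 1 / real k"
  define lam where "lam j = \<mu> * (1 + \<theta>) ^ (2 * (t - j))" for j
  define B where "B = exp (\<mu> * \<theta> * real n)"
  define S where "S = Sset k i"
  have kp: "real k \<ge> 2" using k by simp
  have th0: "\<theta> \<ge> 0" and th1: "\<theta> \<le> 1" and mu0: "\<mu> > 0" and thmu: "\<theta> = 2 * \<mu>"
    using kp by (auto simp: \<theta>_def \<mu>_def)
  have pw: "(1 + \<theta>) ^ (2 * m) \<le> 3/2" if "m \<le> t" for m
  proof (rule pow_exp_bound[OF th0])
    have "2 * real m * \<theta> \<le> 2 * real t * \<theta>" using that th0 by (simp add: mult_right_mono)
    also have "\<dots> = 4 * real t / real k" by (simp add: \<theta>_def)
    also have "\<dots> \<le> 1/4" using t kp by (simp add: divide_le_eq)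
    finally show "2 * real m * \<theta> \<le> 1/4" .
  qed
  have pw1: "(1 + \<theta>) ^ m \<ge> 1" for m using th0 by simp
  have lam_ge: "lam j \<ge> \<mu>" for j using pw1[of "2 * (t - j)"] mu0 by (simp add: lam_def)
  have lam_le: "lam j \<le> 3/2 * \<mu>" for j using pw[of "t - j"] mu0 by (simp add: lam_def)
  have bound: "measure_pmf.prob (trajectory (three_majority_step n) t (x0 k)) {xs. cnt n S (last xs) = n}
        \<le> exp (lam 0 * real (cnt n S (x0 k))) / B"
  proof (rule cap_bound[OF _ th1])
    show "B > 0" by (simp add: B_def)
    show "lam j \<ge> 0" for j using lam_ge[of j] mu0 by simp
    show "B \<le> exp (lam j * \<theta> * real n)" for j
      unfolding B_def using lam_ge[of j] th0 by (simp add: mult_right_mono)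
    fix j y assume j: "j < t" and small: "real (cnt n S y) < \<theta> * real n"
    define N where "N = real (cnt n S y)"
    define a where "a = N / real n"
    define l' where "l' = lam (Suc j)"
    have l'0: "l' \<ge> 0" using lam_ge mu0 unfolding l'_def by (meson less_le order_trans)
    have l'th: "l' \<le> \<theta>" using lam_le[of "Suc j"] thmu mu0 unfolding l'_def by simp
    have l'1: "l' \<le> 1" using l'th th1 by simp
    have N0: "N \<ge> 0" by (simp add: N_def)
    have a0: "a \<ge> 0" by (simp add: a_def N_def)
    have ath: "a \<le> \<theta>" using small n by (simp add: a_def N_def divide_le_eq)
    have nN: "real n * (a^2 + a) = N * (1 + a)" using n by (simp add: a_def power2_eq_square field_simps)
    have e1: "exp l' - 1 \<le> l' * (1 + l')" using exp_bound[OF l'0 l'1] by (simp add: power2_eq_square algebra_simps)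
    have lamj: "lam j = l' * (1 + \<theta>)^2"
    proof -
      have "2 * (t - j) = 2 * (t - Suc j) + 2" using j by simp
      then show ?thesis by (simp add: lam_def l'_def power_add mult_ac power2_eq_square)
    qed
    have "(exp l' - 1) * real n * (a^2 + a) = (exp l' - 1) * (N * (1 + a))" by (simp add: nN mult_ac)
    also have "\<dots> \<le> (l' * (1 + l')) * (N * (1 + \<theta>))"
      by (intro mult_mono e1 mult_left_mono) (use N0 ath a0 l'0 in auto)
    also have "\<dots> \<le> (l' * (1 + \<theta>)) * (N * (1 + \<theta>))"
      by (intro mult_right_mono mult_left_mono) (use N0 th0 l'0 l'th in auto)
    also have "\<dots> = lam j * N" by (simp add: lamj power2_eq_square mult_ac)
    finally have key: "(exp l' - 1) * real n * (a^2 + a) \<le> lam j * N" .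
    have "measure_pmf.expectation (three_majority_step n y) (\<lambda>z. exp (l' * real (cnt n S z)))
          \<le> exp ((exp l' - 1) * real n * (a^2 + a))"
      unfolding a_def N_def by (rule tm_mgf[OF n l'0])
    also have "\<dots> \<le> exp (lam j * N)" using key by simp
    finally show "measure_pmf.expectation (three_majority_step n y) (\<lambda>z. exp (lam (Suc j) * real (cnt n S z)))
          \<le> exp (lam j * real (cnt n S y))" by (simp add: l'_def N_def)
  qed
  have c0: "real (cnt n S (x0 k)) \<le> real n / real k + 1" unfolding S_def by (rule x0_cnt) (use k i in auto)
  have "exp (lam 0 * real (cnt n S (x0 k))) / B = exp (lam 0 * real (cnt n S (x0 k)) - \<mu> * \<theta> * real n)"
    by (simp add: B_def exp_diff)
  also have "\<dots> \<le> exp (1 - real n / (2 * real k ^ 2))"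
  proof -
    have "lam 0 * real (cnt n S (x0 k)) \<le> (3/2 * \<mu>) * (real n / real k + 1)"
      by (intro mult_mono lam_le c0) (use mu0 in auto)
    also have "\<dots> = 3/2 * real n / real k ^ 2 + 3 / (2 * real k)"
      using kp by (simp add: \<mu>_def field_simps power2_eq_square)
    finally have 1: "lam 0 * real (cnt n S (x0 k)) \<le> 3/2 * real n / real k ^ 2 + 3 / (2 * real k)" .
    have 2: "\<mu> * \<theta> * real n = 2 * real n / real k ^ 2" by (simp add: \<mu>_def \<theta>_def power2_eq_square)
    have 3: "3 / (2 * real k) \<le> 1" using kp by (simp add: divide_le_eq)
    define q where "q = real n / real k ^ 2"
    have h1: "lam 0 * real (cnt n S (x0 k)) \<le> 3/2 * q + 3 / (2 * real k)" using 1 by (simp add: q_def)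
    have h2: "\<mu> * \<theta> * real n = 2 * q" using 2 by (simp add: q_def)
    have 4: "real n / (2 * real k ^ 2) = q / 2" by (simp add: q_def)
    have "lam 0 * real (cnt n S (x0 k)) - \<mu> * \<theta> * real n \<le> 1 - real n / (2 * real k ^ 2)"
      unfolding 4 using h1 h2 3 by linarith
    then show ?thesis by simp
  qed
  finally show ?thesis using bound by (simp add: S_def)
qed



lemma tc_single:
  assumes n: "n > 0" and k: "k \<ge> 2" and t: "real t \<le> real k / 32" and i: "i \<le> k"
  shows "measure_pmf.prob (trajectory (two_choices_step n) t (x0 k))
           {xs. cnt n (Sset k i) (last xs) = n} \<le> exp (3/2 - real n / (2 * real k))"
proof -
  define \<theta> :: real where "\<theta> = 2 / real k"
  define lam where "lam j = 1 + 8 * \<theta> * real (t - j)" for j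
  define B where "B = exp (\<theta> * real n)"
  define S where "S = Sset k i"
  have kp: "real k \<ge> 2" using k by simp
  have th0: "\<theta> \<ge> 0" and th1: "\<theta> \<le> 1"
    using kp by (auto simp: \<theta>_def)
  have lam_ge: "lam j \<ge> 1" for j using th0 by (simp add: lam_def)
  have lam_le: "lam j \<le> 3/2" for j
  proof -
    have "8 * \<theta> * real (t - j) \<le> 8 * \<theta> * real t" using th0 by (intro mult_left_mono) auto
    also have "\<dots> = 16 * real t / real k" by (simp add: \<theta>_def)
    also have "\<dots> \<le> 1/2" using t kp by (simp add: divide_le_eq)
    finally show ?thesis by (simp add: lam_def)
  qed
  have bound: "measure_pmf.prob (trajectory (two_choices_step n) t (x0 k)) {xs. cnt n S (last xs) = n}
        \<le> exp (lam 0 * real (cnt n S (x0 k))) / B"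
  proof (rule cap_bound[OF _ th1])
    show "B > 0" by (simp add: B_def)
    show "lam j \<ge> 0" for j using lam_ge[of j] by simp
    show "B \<le> exp (lam j * \<theta> * real n)" for j
    proof -
      have "1 * (\<theta> * real n) \<le> lam j * (\<theta> * real n)"
        using lam_ge[of j] th0 by (intro mult_right_mono) auto
      then show ?thesis unfolding B_def by (simp add: mult.assoc)
    qed
    fix j y assume j: "j < t" and small: "real (cnt n S y) < \<theta> * real n"
    define N where "N = real (cnt n S y)"
    define a where "a = N / real n"
    define l' where "l' = lam (Suc j)"
    have l'0: "l' \<ge> 0" using lam_ge unfolding l'_def by (meson less_le order_trans zero_le_one)
    have l'2: "l' \<le> 2" using lam_le[of "Suc j"] unfolding l'_def by simp
    have N0: "N \<ge> 0" by (simp add: N_def)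
    have a0: "a \<ge> 0" by (simp add: a_def N_def)
    have ath: "a \<le> \<theta>" using small n by (simp add: a_def N_def divide_le_eq)
    have nN: "real n * a^2 = N * a" using n by (simp add: a_def power2_eq_square field_simps)
    have e1: "exp l' - 1 \<le> 8"
    proof -
      have "exp l' \<le> exp 2" using l'2 by simp
      also have "exp (2::real) = exp 1 * exp 1" by (simp flip: exp_add)
      also have "\<dots> \<le> 3 * 3" using exp_le by (intro mult_mono) auto
      finally show ?thesis by simp
    qed
    have e0: "exp l' - 1 \<ge> 0" using l'0 by simp
    have lamj: "lam j = l' + 8 * \<theta>"
    proof -
      have "real (t - j) = real (t - Suc j) + 1" using j by simp
      then show ?thesis by (simp add: lam_def l'_def algebra_simps)
    qed
    have "(exp l' - 1) * real n * a^2 = (exp l' - 1) * (N * a)" by (simp add: nN mult_ac)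
    also have "\<dots> \<le> 8 * (N * \<theta>)"
      by (intro mult_mono e1 mult_left_mono) (use N0 ath a0 e0 in auto)
    finally have key: "l' * N + (exp l' - 1) * real n * a^2 \<le> lam j * N"
      by (simp add: lamj algebra_simps)
    have "measure_pmf.expectation (two_choices_step n y) (\<lambda>z. exp (l' * real (cnt n S z)))
          \<le> exp (l' * N + (exp l' - 1) * real n * a^2)"
      unfolding a_def N_def by (rule tc_mgf[OF n l'0])
    also have "\<dots> \<le> exp (lam j * N)" using key by simp
    finally show "measure_pmf.expectation (two_choices_step n y) (\<lambda>z. exp (lam (Suc j) * real (cnt n S z)))
          \<le> exp (lam j * real (cnt n S y))" by (simp add: l'_def N_def)
  qed
  have c0: "real (cnt n S (x0 k)) \<le> real n / real k + 1" unfolding S_def by (rule x0_cnt) (use k i in auto)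
  have "exp (lam 0 * real (cnt n S (x0 k))) / B = exp (lam 0 * real (cnt n S (x0 k)) - \<theta> * real n)"
    by (simp add: B_def exp_diff)
  also have "\<dots> \<le> exp (3/2 - real n / (2 * real k))"
  proof -
    define q where "q = real n / real k"
    have h1: "lam 0 * real (cnt n S (x0 k)) \<le> 3/2 * (q + 1)"
      unfolding q_def by (intro mult_mono lam_le c0) (use lam_ge[of 0] in auto)
    have h2: "\<theta> * real n = 2 * q" by (simp add: q_def \<theta>_def)
    have h4: "real n / (2 * real k) = q / 2" by (simp add: q_def)
    have "lam 0 * real (cnt n S (x0 k)) - \<theta> * real n \<le> 3/2 - real n / (2 * real k)"
    proof -
      have h1': "lam 0 * real (cnt n S (x0 k)) \<le> 3/2 * q + 3/2" using h1 by (simp add: algebra_simps)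
      show ?thesis unfolding h4 using h1' h2 by linarith
    qed
    then show ?thesis by simp
  qed
  finally show ?thesis using bound by (simp add: S_def)
qed



lemma ln_ge1: "real n \<ge> 3 \<Longrightarrow> ln (real n) \<ge> 1"
proof -
  assume "real n \<ge> 3"
  then have "exp 1 \<le> real n" using exp_le by linarith
  moreover have "real n > 0" using \<open>real n \<ge> 3\<close> by simp
  ultimately show ?thesis using ln_ge_iff[of "real n" 1] by simp
qed

lemma fin_arith:
  fixes P A X :: real
  assumes n: "n \<ge> 3" and P: "P \<le> real (Suc T) * (real (Suc k) * exp (A - X))"
    and T: "T \<le> n" and k: "k \<le> n" and X: "X \<ge> 4 * ln (real n)" and A: "A \<le> 3/2"
  shows "P \<le> 4 * exp 2 * real n powr (- 2)"
proof -
  have np: "real n > 0" using n by simp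
  have e: "exp (A - X) \<le> exp (3/2) * real n powr (-4)"
  proof -
    have "exp (A - X) \<le> exp (3/2 + (-4) * ln (real n))" using A X by simp
    also have "\<dots> = exp (3/2) * real n powr (-4)" using np by (subst exp_add) (simp add: powr_def mult.commute)
    finally show ?thesis .
  qed
  have s: "real (Suc T) * real (Suc k) \<le> 4 * real n ^ 2"
  proof -
    have "real (Suc T) \<le> 2 * real n" "real (Suc k) \<le> 2 * real n" using T k n by linarith+
    then have "real (Suc T) * real (Suc k) \<le> (2 * real n) * (2 * real n)" by (intro mult_mono) auto
    then show ?thesis by (simp add: power2_eq_square)
  qed
  have "P \<le> real (Suc T) * real (Suc k) * exp (A - X)" using P by (simp add: mult.assoc)
  also have "\<dots> \<le> (4 * real n ^ 2) * (exp (3/2) * real n powr (-4))"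
    by (intro mult_mono s e) auto
  also have "\<dots> = 4 * exp (3/2) * real n powr (-2)"
  proof -
    have "real n powr (-2) = real n powr (2 + -4)" by simp
    also have "\<dots> = real n powr 2 * real n powr (-4)" by (rule powr_add)
    also have "real n powr 2 = real n ^ 2" using np by simp
    finally show ?thesis by (simp add: mult_ac)
  qed
  also have "\<dots> \<le> 4 * exp 2 * real n powr (-2)"
    by (intro mult_right_mono) auto
  finally show ?thesis .
qed

theorem theorem2p6:
  shows
  "(\<exists>c>0. \<exists>d>0. \<exists>c'>0. \<exists>C>0. \<exists>n0. \<forall>n\<ge>n0. \<forall>k::nat.
      2 \<le> k \<and> real k \<le> c * sqrt (real n / ln (real n)) \<longrightarrow>
      (\<exists>x::nat \<Rightarrow> nat. (\<forall>v<n. x v \<in> {1..k}) \<and>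
         prob_cons_before (three_majority_step n) n x (d * real k) \<le> C * real n powr (- c')))
 \<and> (\<exists>c>0. \<exists>d>0. \<exists>c'>0. \<exists>C>0. \<exists>n0. \<forall>n\<ge>n0. \<forall>k::nat.
      2 \<le> k \<and> real k \<le> c * real n / ln (real n) \<longrightarrow>
      (\<exists>x::nat \<Rightarrow> nat. (\<forall>v<n. x v \<in> {1..k}) \<and>
         prob_cons_before (two_choices_step n) n x (d * real k) \<le> C * real n powr (- c')))"
proof (rule conjI)
  show "\<exists>c>0. \<exists>d>0. \<exists>c'>0. \<exists>C>0. \<exists>n0. \<forall>n\<ge>n0. \<forall>k::nat.
      2 \<le> k \<and> real k \<le> c * sqrt (real n / ln (real n)) \<longrightarrow>
      (\<exists>x::nat \<Rightarrow> nat. (\<forall>v<n. x v \<in> {1..k}) \<and>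
         prob_cons_before (three_majority_step n) n x (d * real k) \<le> C * real n powr (- c'))"
  proof -
  have main: "\<forall>n\<ge>(3::nat). \<forall>k::nat. 2 \<le> k \<and> real k \<le> 1/4 * sqrt (real n / ln (real n)) \<longrightarrow>
     (\<exists>x::nat\<Rightarrow>nat. (\<forall>v<n. x v \<in> {1..k}) \<and> prob_cons_before (three_majority_step n) n x (1/16 * real k) \<le> 4 * exp 2 * real n powr (- 2))"
  proof (intro allI impI)
    fix n k :: nat assume n: "3 \<le> n" and k: "2 \<le> k \<and> real k \<le> 1/4 * sqrt (real n / ln (real n))"
    have n3: "real n \<ge> 3" using n by simp
    have l1: "ln (real n) \<ge> 1" by (rule ln_ge1[OF n3])
    have kk: "real k ^ 2 \<le> real n / ln (real n) / 16"
    proof -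
      have "real k * 4 \<le> sqrt (real n / ln (real n))" using k by simp
      then have "(real k * 4)^2 \<le> (sqrt (real n / ln (real n)))^2" by (intro power_mono) auto
      also have "\<dots> = real n / ln (real n)" using l1 n3 by simp
      finally show ?thesis by (simp add: power_mult_distrib)
    qed
    have k0: "real k \<ge> 2" using k by simp
    have X: "real n / (2 * real k ^ 2) \<ge> 4 * ln (real n)"
    proof -
      have "8 * ln (real n) * real k ^ 2 \<le> 8 * ln (real n) * (real n / ln (real n) / 16)"
        using kk l1 by (intro mult_left_mono) auto
      also have "\<dots> = real n / 2" using l1 by simp
      finally have "8 * ln (real n) * real k ^ 2 \<le> real n / 2" .
      then have "4 * ln (real n) * (2 * real k ^ 2) \<le> real n" by simp
      then show ?thesis using k0 by (simp add: le_divide_eq)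
    qed
    have kn: "k \<le> n"
    proof -
      have "real k \<le> real k ^ 2" using k0 by (simp add: power2_eq_square)
      also have "\<dots> \<le> real n / ln (real n) / 16" by (rule kk)
      also have "\<dots> \<le> real n" using l1 n3 by (simp add: divide_le_eq)
      finally show ?thesis by simp
    qed
    show "\<exists>x::nat\<Rightarrow>nat. (\<forall>v<n. x v \<in> {1..k}) \<and> prob_cons_before (three_majority_step n) n x (1/16 * real k) \<le> 4 * exp 2 * real n powr (- 2)"
    proof (intro exI[of _ "x0 k"] conjI allI impI)
      fix v show "x0 k v \<in> {1..k}" using x0_range[of k v] k by auto
    next
      have P: "prob_cons_before (three_majority_step n) n (x0 k) (1/16 * real k)
        \<le> real (Suc (nat \<lfloor>1/16 * real k\<rfloor>)) * (real (Suc k) * exp (1 - real n / (2 * real k ^ 2)))"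
      proof (rule cons_union)
        fix t i assume t: "t \<le> nat \<lfloor>1/16 * real k\<rfloor>" and i: "i \<le> k"
        have tt: "real t \<le> real k / 16" using t by linarith
        show "measure_pmf.prob (trajectory (three_majority_step n) t (x0 k))
            {xs. cnt n (Sset k i) (last xs) = n} \<le> exp (1 - real n / (2 * real k ^ 2))"
          by (rule tm_single[OF _ _ tt i]) (use n k in auto)
      qed
      have T: "nat \<lfloor>1/16 * real k\<rfloor> \<le> n" using kn by linarith
      show "prob_cons_before (three_majority_step n) n (x0 k) (1/16 * real k) \<le> 4 * exp 2 * real n powr (- 2)"
        using fin_arith[OF n P T kn X] by simp
    qed
  qed
  show ?thesis
    by (intro exI[of _ "1/4"] exI[of _ "1/16"] exI[of _ "2::real"] exI[of _ "4 * exp 2"] exI[of _ "3::nat"] conjI main) auto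
  qed
next
  show "\<exists>c>0. \<exists>d>0. \<exists>c'>0. \<exists>C>0. \<exists>n0. \<forall>n\<ge>n0. \<forall>k::nat.
      2 \<le> k \<and> real k \<le> c * real n / ln (real n) \<longrightarrow>
      (\<exists>x::nat \<Rightarrow> nat. (\<forall>v<n. x v \<in> {1..k}) \<and>
         prob_cons_before (two_choices_step n) n x (d * real k) \<le> C * real n powr (- c'))"
  proof -
  have main: "\<forall>n\<ge>(3::nat). \<forall>k::nat. 2 \<le> k \<and> real k \<le> 1/8 * real n / ln (real n) \<longrightarrow>
     (\<exists>x::nat\<Rightarrow>nat. (\<forall>v<n. x v \<in> {1..k}) \<and> prob_cons_before (two_choices_step n) n x (1/32 * real k) \<le> 4 * exp 2 * real n powr (- 2))"
  proof (intro allI impI)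
    fix n k :: nat assume n: "3 \<le> n" and k: "2 \<le> k \<and> real k \<le> 1/8 * real n / ln (real n)"
    have n3: "real n \<ge> 3" using n by simp
    have l1: "ln (real n) \<ge> 1" by (rule ln_ge1[OF n3])
    have k0: "real k \<ge> 2" using k by simp
    have kk: "8 * real k * ln (real n) \<le> real n" using k l1 by (simp add: le_divide_eq)
    have X: "real n / (2 * real k) \<ge> 4 * ln (real n)"
      using kk k0 by (simp add: le_divide_eq mult_ac)
    have kn: "k \<le> n"
    proof -
      have "real k * 1 \<le> real k * ln (real n)" using l1 k0 by (intro mult_left_mono) auto
      then have "real k \<le> 8 * real k * ln (real n)" using k0 by linarith
      then show ?thesis using kk by simp
    qed
    show "\<exists>x::nat\<Rightarrow>nat. (\<forall>v<n. x v \<in> {1..k}) \<and> prob_cons_before (two_choices_step n) n x (1/32 * real k) \<le> 4 * exp 2 * real n powr (- 2)"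
    proof (intro exI[of _ "x0 k"] conjI allI impI)
      fix v show "x0 k v \<in> {1..k}" using x0_range[of k v] k by auto
    next
      have P: "prob_cons_before (two_choices_step n) n (x0 k) (1/32 * real k)
        \<le> real (Suc (nat \<lfloor>1/32 * real k\<rfloor>)) * (real (Suc k) * exp (3/2 - real n / (2 * real k)))"
      proof (rule cons_union)
        fix t i assume t: "t \<le> nat \<lfloor>1/32 * real k\<rfloor>" and i: "i \<le> k"
        have tt: "real t \<le> real k / 32" using t by linarith
        show "measure_pmf.prob (trajectory (two_choices_step n) t (x0 k))
            {xs. cnt n (Sset k i) (last xs) = n} \<le> exp (3/2 - real n / (2 * real k))"
          by (rule tc_single[OF _ _ tt i]) (use n k in auto)
      qed
      have T: "nat \<lfloor>1/32 * real k\<rfloor> \<le> n" using kn by linarith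
      show "prob_cons_before (two_choices_step n) n (x0 k) (1/32 * real k) \<le> 4 * exp 2 * real n powr (- 2)"
        using fin_arith[OF n P T kn X] by simp
    qed
  qed
  show ?thesis
    by (intro exI[of _ "1/8"] exI[of _ "1/32"] exI[of _ "2::real"] exI[of _ "4 * exp 2"] exI[of _ "3::nat"] conjI main) auto
  qed
qed

end
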